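(* Let $q\ge2$ be an integer and $1\le p<q$. Let $(a_t)_{t\in\mathbb{Z}}$ be i.i.d. nonnegative random variables with $\|a_0\|_p<1$ and $\|a_0\|_q\ge1$, and let $(\varepsilon_t)_{t\in\mathbb{Z}}$ be identically distributed integrable random variables with $\mathbb{E}|\varepsilon_0|>0$, independent of $(a_t)$. Set $Z_{t-1}=a_{t-1}a_{t-2}\cdots a_{t-q}$ and consider $X_t=\sum_{j\ge1}\prod_{i=1}^jZ_{t-i}\,\varepsilon_{t-j}+\varepsilon_t$ (the solution of $X_t=Z_{t-1}X_{t-1}+\varepsilon_t$). Then $\|Z_0\|_p<1$, but $\mathbb{E}\big[\prod_{i=1}^jZ_{t-i}\big]$ does not converge to $0$ as $j\to\infty$; consequently $\big\|\prod_{i=1}^jZ_{t-i}\varepsilon_{t-j}\big\|_1$ does not tend to $0$ and the series defining $X_t$ does not converge in $\mathbb{L}^1$.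
   Context: $\|X\|_p=(\mathbb{E}|X|^p)^{1/p}$. *)

theory Defs
  imports "HOL-Probability.Probability"
begin

definition Lp_norm :: "'a measure \<Rightarrow> real \<Rightarrow> ('a \<Rightarrow> real) \<Rightarrow> ennreal" where
  "Lp_norm M p X =
     (let m = (\<integral>\<^sup>+ x. ennreal (\<bar>X x\<bar> powr p) \<partial>M)
      in if m = \<infinity> then \<infinity> else ennreal (enn2real m powr (1 / p)))"

text \<open>Z s = a_s a_(s-1) ... a_(s-q+1), so that Z_(t-1) = a_(t-1) ... a_(t-q).\<close>
definition Zprod :: "(int \<Rightarrow> 'a \<Rightarrow> real) \<Rightarrow> nat \<Rightarrow> int \<Rightarrow> 'a \<Rightarrow> real" where
  "Zprod a q s x = (\<Prod>k<q. a (s - int k) x)"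

definition partial_X :: "(int \<Rightarrow> 'a \<Rightarrow> real) \<Rightarrow> (int \<Rightarrow> 'a \<Rightarrow> real) \<Rightarrow> nat \<Rightarrow> int \<Rightarrow> nat \<Rightarrow> 'a \<Rightarrow> real" where
  "partial_X a eps q t n x =
     eps t x + (\<Sum>j\<in>{1..n}. (\<Prod>i\<in>{1..j}. Zprod a q (t - int i) x) * eps (t - int j) x)"

end

theory Submission
  imports Defs
begin
lemma reindex_prod:
  fixes g :: "nat \<Rightarrow> 'b::comm_monoid_mult"
  shows "(\<Prod>i\<in>{1..j}. \<Prod>k<q. g (i+k)) = (\<Prod>u\<in>{1..j+q-1}. g u ^ card {k. k<q \<and> k<u \<and> u \<le> k+j})"
proof -
  have "(\<Prod>i\<in>{1..j}. \<Prod>k<q. g (i+k)) = (\<Prod>k<q. \<Prod>i\<in>{1..j}. g (i+k))"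
    by (rule prod.swap)
  also have "\<dots> = (\<Prod>k<q. \<Prod>u\<in>{1..j+q-1}. if k<u \<and> u \<le> k+j then g u else 1)"
  proof (rule prod.cong[OF refl])
    fix k assume k: "k \<in> {..<q}"
    have "(\<Prod>i\<in>{1..j}. g (i+k)) = (\<Prod>u\<in>{1+k..j+k}. g u)"
      by (rule prod.shift_bounds_cl_nat_ivl[symmetric])
    also have "{1+k..j+k} = {u\<in>{1..j+q-1}. k<u \<and> u \<le> k+j}" using k by auto
    also have "(\<Prod>u\<in>{u\<in>{1..j+q-1}. k<u \<and> u \<le> k+j}. g u) = (\<Prod>u\<in>{1..j+q-1}. if k<u \<and> u \<le> k+j then g u else 1)"
      by (rule prod.inter_filter) simp
    finally show "(\<Prod>i\<in>{1..j}. g (i+k)) = (\<Prod>u\<in>{1..j+q-1}. if k<u \<and> u \<le> k+j then g u else 1)" .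
  qed
  also have "\<dots> = (\<Prod>u\<in>{1..j+q-1}. \<Prod>k<q. if k<u \<and> u \<le> k+j then g u else 1)"
    by (rule prod.swap)
  also have "\<dots> = (\<Prod>u\<in>{1..j+q-1}. g u ^ card {k. k<q \<and> k<u \<and> u \<le> k+j})"
  proof (rule prod.cong[OF refl])
    fix u
    have "(\<Prod>k<q. if k<u \<and> u \<le> k+j then g u else 1) = (\<Prod>k\<in>{k\<in>{..<q}. k<u \<and> u \<le> k+j}. g u)"
      by (rule prod.inter_filter[symmetric]) simp
    also have "\<dots> = g u ^ card {k. k<q \<and> k<u \<and> u \<le> k+j}"
      by (simp add: conj_assoc)
    finally show "(\<Prod>k<q. if k<u \<and> u \<le> k+j then g u else 1) = g u ^ card {k. k<q \<and> k<u \<and> u \<le> k+j}" .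
  qed
  finally show ?thesis .
qed

lemma indep_prod:
  fixes a :: "int \<Rightarrow> 'w \<Rightarrow> real" and f :: "int \<Rightarrow> real \<Rightarrow> real"
  assumes M: "prob_space M" and a_iid: "prob_space.indep_vars M (\<lambda>_. borel) a UNIV"
   and a_ident: "\<And>t. distr M borel (a t) = distr M borel (a 0)"
   and S: "finite S" and f: "\<And>s. s\<in>S \<Longrightarrow> f s \<in> borel_measurable borel"
  shows "(\<integral>\<^sup>+x. (\<Prod>s\<in>S. ennreal (f s (a s x))) \<partial>M) = (\<Prod>s\<in>S. \<integral>\<^sup>+x. ennreal (f s (a 0 x)) \<partial>M)"
proof -
  interpret prob_space M by (rule M)
  have rv: "a s \<in> borel_measurable M" for s
    using a_iid by (simp add: indep_vars_def)
  have ind: "indep_vars (\<lambda>_. borel) (\<lambda>s x. ennreal (f s (a s x))) S"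
    by (rule indep_vars_compose2[OF indep_vars_subset[OF a_iid]]) (use f in auto)
  have "(\<integral>\<^sup>+x. (\<Prod>s\<in>S. ennreal (f s (a s x))) \<partial>M) = (\<Prod>s\<in>S. \<integral>\<^sup>+x. ennreal (f s (a s x)) \<partial>M)"
    by (rule indep_vars_nn_integral[OF S ind]) simp
  also have "\<dots> = (\<Prod>s\<in>S. \<integral>\<^sup>+x. ennreal (f s (a 0 x)) \<partial>M)"
  proof (rule prod.cong[OF refl])
    fix s assume s: "s \<in> S"
    note [measurable] = f[OF s] rv
    have "(\<integral>\<^sup>+x. ennreal (f s (a s x)) \<partial>M) = (\<integral>\<^sup>+y. ennreal (f s y) \<partial>distr M borel (a s))"
      by (subst nn_integral_distr) auto
    also have "\<dots> = (\<integral>\<^sup>+y. ennreal (f s y) \<partial>distr M borel (a 0))" by (simp only: a_ident[of s])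
    also have "\<dots> = (\<integral>\<^sup>+x. ennreal (f s (a 0 x)) \<partial>M)"
      by (subst nn_integral_distr) auto
    finally show "(\<integral>\<^sup>+x. ennreal (f s (a s x)) \<partial>M) = (\<integral>\<^sup>+x. ennreal (f s (a 0 x)) \<partial>M)" .
  qed
  finally show ?thesis .
qed

lemma Lp1_eq: "Lp_norm M 1 X = (\<integral>\<^sup>+x. ennreal \<bar>X x\<bar> \<partial>M)"
proof -
  have e: "(\<integral>\<^sup>+x. ennreal (\<bar>X x\<bar> powr 1) \<partial>M) = (\<integral>\<^sup>+x. ennreal \<bar>X x\<bar> \<partial>M)"
    by (simp add: powr_one_gt_zero_iff)
  show ?thesis
    unfolding Lp_norm_def Let_def e
    by (cases "(\<integral>\<^sup>+x. ennreal \<bar>X x\<bar> \<partial>M)") (auto simp: powr_one_gt_zero_iff)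
qed

lemma (in prob_space) indep_var_nn_integral2:
  fixes X Y :: "'a \<Rightarrow> ennreal"
  assumes "indep_var borel X borel Y"
  shows "(\<integral>\<^sup>+\<omega>. X \<omega> * Y \<omega> \<partial>M) = (\<integral>\<^sup>+\<omega>. X \<omega> \<partial>M) * (\<integral>\<^sup>+\<omega>. Y \<omega> \<partial>M)"
proof -
  have *: "(\<lambda>\<omega>. X \<omega> * Y \<omega>) = (\<lambda>\<omega>. \<Prod>i\<in>UNIV. (case_bool X Y i \<omega>))"
    by (simp add: UNIV_bool mult.commute)
  have **: "(\<lambda> _. borel) = case_bool borel borel"
    by (rule ext, metis (full_types) bool.simps(3) bool.simps(4))
  have ind: "indep_vars (\<lambda>_. borel) (case_bool X Y) UNIV"
    using assms unfolding indep_var_def ** .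
  show ?thesis
    unfolding * by (subst indep_vars_nn_integral[OF _ ind]) (auto simp: UNIV_bool mult.commute)
qed

lemma not_tendsto_0:
  fixes f :: "nat \<Rightarrow> ennreal"
  assumes "\<And>j. j \<ge> N \<Longrightarrow> c \<le> f j" "0 < c"
  shows "\<not> f \<longlonglongrightarrow> 0"
proof
  assume "f \<longlonglongrightarrow> 0"
  from order_tendstoD(2)[OF this assms(2)] obtain K where "\<And>j. j \<ge> K \<Longrightarrow> f j < c"
    by (auto simp: eventually_sequentially)
  then have "f (max K N) < c" by simp
  moreover have "c \<le> f (max K N)" using assms(1) by simp
  ultimately show False by simp
qed


lemma ennreal_pow_pos: "0 < (x::ennreal) \<Longrightarrow> 0 < x ^ n"
  by (metis power_not_zero gr_zeroI)

lemma powr_lt1: "0 \<le> (r::real) \<Longrightarrow> r < 1 \<Longrightarrow> 0 < e \<Longrightarrow> r powr e < 1"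
  by (cases "r = 0") (auto simp: powr01_less_one)

locale setting = prob_space M for M :: "'w measure" +
  fixes a eps :: "int \<Rightarrow> 'w \<Rightarrow> real" and q :: nat and p :: real
  assumes q: "q \<ge> 2" and p: "1 \<le> p" "p < real q"
    and a_iid: "indep_vars (\<lambda>_. borel) a UNIV"
    and a_ident: "\<And>t. distr M borel (a t) = distr M borel (a 0)"
    and a_nonneg: "\<And>t x. x \<in> space M \<Longrightarrow> a t x \<ge> 0"
    and a_p: "Lp_norm M p (a 0) < 1"
    and a_q: "Lp_norm M (real q) (a 0) \<ge> 1"
    and eps_meas: "\<And>t. eps t \<in> borel_measurable M"
    and eps_ident: "\<And>t. distr M borel (eps t) = distr M borel (eps 0)"
    and eps_int: "integrable M (eps 0)"
    and eps_pos: "(\<integral>x. \<bar>eps 0 x\<bar> \<partial>M) > 0"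
    and indep: "indep_var (PiM UNIV (\<lambda>_. borel)) (\<lambda>x t. a t x)
                                        (PiM UNIV (\<lambda>_. borel)) (\<lambda>x t. eps t x)"
begin

lemma a_meas[measurable]: "a s \<in> borel_measurable M"
  using a_iid by (simp add: indep_vars_def)

declare eps_meas[measurable]

definition h :: "nat \<Rightarrow> ennreal" where "h m = (\<integral>\<^sup>+x. ennreal (a 0 x ^ m) \<partial>M)"

lemma hq_ge1: "1 \<le> h q"
proof -
  have eq: "(\<integral>\<^sup>+x. ennreal (\<bar>a 0 x\<bar> powr real q) \<partial>M) = h q"
    unfolding h_def using q
    by (intro nn_integral_cong) (simp add: a_nonneg powr_realpow')
  show ?thesis
  proof (cases "h q = \<infinity>")
    case True then show ?thesis by simp
  next
    case False
    let ?r = "enn2real (h q)"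
    have "1 \<le> ennreal (?r powr (1 / real q))"
      using a_q False unfolding Lp_norm_def Let_def eq by simp
    then have 1: "1 \<le> ?r powr (1 / real q)"
      by (simp only: ennreal_ge_1)
    have "1 \<le> ?r"
    proof (rule ccontr)
      assume "\<not> 1 \<le> ?r"
      then have "?r < 1" by simp
      moreover have "?r \<ge> 0" by simp
      ultimately have "?r powr (1 / real q) < 1"
        using q by (intro powr_lt1) auto
      with 1 show False by simp
    qed
    moreover have "h q = ennreal ?r"
      using False by (simp add: ennreal_enn2real less_top[symmetric])
    ultimately show ?thesis by (metis ennreal_ge_1)
  qed
qed

lemma h_pos: "0 < h m" if "m \<le> q"
proof (cases "m = 0")
  case True then show ?thesis by (simp add: h_def emeasure_space_1)
next
  case False
  show ?thesis
  proof (rule ccontr)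
    assume "\<not> 0 < h m"
    then have "h m = 0" by (simp add: zero_less_iff_neq_zero)
    then have "AE x in M. ennreal (a 0 x ^ m) = 0"
      unfolding h_def by (subst (asm) nn_integral_0_iff_AE) auto
    then have "AE x in M. ennreal (a 0 x ^ q) = 0"
      using AE_space
    proof (eventually_elim)
      case (elim x)
      have nn: "0 \<le> a 0 x" using a_nonneg elim(2) by simp
      have "a 0 x ^ m \<le> 0" using elim(1) by (simp add: ennreal_eq_0_iff)
      then have "a 0 x ^ m = 0" using zero_le_power[OF nn, of m] by (meson antisym)
      then have "a 0 x = 0" using False by simp
      then show ?case using q by simp
    qed
    then have "h q = 0"
      unfolding h_def by (subst nn_integral_0_iff_AE) auto
    with hq_ge1 show False by simp
  qed
qed

definition P :: "int \<Rightarrow> nat \<Rightarrow> 'w \<Rightarrow> real" where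
  "P t j x = (\<Prod>i\<in>{1..j}. Zprod a q (t - int i) x)"
definition nn :: "nat \<Rightarrow> nat \<Rightarrow> nat" where "nn j u = card {k. k<q \<and> k<u \<and> u \<le> k+j}"

lemma P_eq: "P t j x = (\<Prod>u\<in>{1..j+q-1}. a (t - int u) x ^ nn j u)"
proof -
  have "P t j x = (\<Prod>i\<in>{1..j}. \<Prod>k<q. (\<lambda>u. a (t - int u) x) (i+k))"
    unfolding P_def Zprod_def by (simp add: algebra_simps)
  also have "\<dots> = (\<Prod>u\<in>{1..j+q-1}. a (t - int u) x ^ nn j u)"
    unfolding nn_def using reindex_prod[where g="\<lambda>u. a (t - int u) x" and j=j and q=q] by simp
  finally show ?thesis .
qed

lemma P_nonneg: "x \<in> space M \<Longrightarrow> 0 \<le> P t j x"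
  unfolding P_def Zprod_def by (intro prod_nonneg) (simp add: a_nonneg)

lemma EP: "(\<integral>\<^sup>+x. ennreal (P t j x) \<partial>M) = (\<Prod>u\<in>{1..j+q-1}. h (nn j u))"
proof -
  let ?U = "{1..j+q-1}"
  have "(\<integral>\<^sup>+x. ennreal (P t j x) \<partial>M) = (\<integral>\<^sup>+x. (\<Prod>u\<in>?U. ennreal (a (t - int u) x ^ nn j u)) \<partial>M)"
    by (intro nn_integral_cong) (simp add: P_eq prod_ennreal a_nonneg)
  also have "\<dots> = (\<integral>\<^sup>+x. (\<Prod>s\<in>(\<lambda>u. t - int u) ` ?U. ennreal (a s x ^ nn j (nat (t - s)))) \<partial>M)"
    by (subst prod.reindex) (auto simp: inj_on_def)
  also have "\<dots> = (\<Prod>s\<in>(\<lambda>u. t - int u) ` ?U. \<integral>\<^sup>+x. ennreal (a 0 x ^ nn j (nat (t - s))) \<partial>M)"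
    by (rule indep_prod[where f="\<lambda>s y. y ^ nn j (nat (t - s))", OF prob_space_axioms a_iid a_ident]) auto
  also have "\<dots> = (\<Prod>u\<in>?U. h (nn j u))" by (subst prod.reindex) (auto simp: inj_on_def h_def)
  finally show ?thesis .
qed

definition \<delta> :: ennreal where "\<delta> = Min ((\<lambda>m. min 1 (h m)) ` {..q})"

lemma \<delta>_le: "m \<le> q \<Longrightarrow> \<delta> \<le> h m"
proof -
  assume m: "m \<le> q"
  have "\<delta> \<le> min 1 (h m)" unfolding \<delta>_def by (rule Min_le) (use m in auto)
  then show ?thesis by simp
qed

lemma \<delta>_le1: "\<delta> \<le> 1"
proof -
  have "\<delta> \<le> min 1 (h 0)" unfolding \<delta>_def by (rule Min_le) auto
  then show ?thesis by simp
qed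

lemma \<delta>_pos: "0 < \<delta>"
  unfolding \<delta>_def by (subst Min_gr_iff) (auto simp: h_pos)

lemma EP_lower: "q \<le> j \<Longrightarrow> \<delta> ^ (2*q) \<le> (\<integral>\<^sup>+x. ennreal (P t j x) \<partial>M)"
proof -
  assume j: "q \<le> j"
  let ?U = "{1..j+q-1}" and ?B = "{u. q \<le> u \<and> u \<le> j}"
  have "\<delta> ^ (2*q) \<le> \<delta> ^ card (?U - ?B)"
  proof (rule power_decreasing[OF _ _ \<delta>_le1])
    have "?U - ?B \<subseteq> {1..<q} \<union> {j+1..j+q}" by auto
    then have "card (?U - ?B) \<le> card ({1..<q} \<union> {j+1..j+q})" by (intro card_mono) auto
    also have "\<dots> \<le> card {1..<q} + card {j+1..j+q}" by (rule card_Un_le)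
    also have "\<dots> \<le> 2*q" by simp
    finally show "card (?U - ?B) \<le> 2*q" .
  qed simp
  also have "\<delta> ^ card (?U - ?B) = (\<Prod>u\<in>?U. if u \<in> ?B then 1 else \<delta>)"
    by (simp add: prod.If_cases Diff_eq)
  also have "\<dots> \<le> (\<Prod>u\<in>?U. h (nn j u))"
  proof (rule prod_mono_ennreal)
    fix u assume u: "u \<in> ?U"
    show "(if u \<in> ?B then 1 else \<delta>) \<le> h (nn j u)"
    proof (cases "u \<in> ?B")
      case True
      then have "{k. k<q \<and> k<u \<and> u \<le> k+j} = {..<q}" by auto
      then have "nn j u = q" by (simp add: nn_def)
      with True hq_ge1 show ?thesis by simp
    next
      case False
      have "nn j u \<le> card {..<q}" unfolding nn_def by (rule card_mono) auto
      then have "\<delta> \<le> h (nn j u)" using \<delta>_le by simp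
      then show ?thesis using False by auto
    qed
  qed
  also have "\<dots> = (\<integral>\<^sup>+x. ennreal (P t j x) \<partial>M)" by (rule EP[symmetric])
  finally show ?thesis .
qed

lemma Eeps: "(\<integral>\<^sup>+x. ennreal \<bar>eps s x\<bar> \<partial>M) = ennreal (\<integral>x. \<bar>eps 0 x\<bar> \<partial>M)"
proof -
  have "(\<integral>\<^sup>+x. ennreal \<bar>eps s x\<bar> \<partial>M) = (\<integral>\<^sup>+y. ennreal \<bar>y\<bar> \<partial>distr M borel (eps s))"
    by (subst nn_integral_distr) auto
  also have "\<dots> = (\<integral>\<^sup>+y. ennreal \<bar>y\<bar> \<partial>distr M borel (eps 0))" by (simp only: eps_ident[of s])
  also have "\<dots> = (\<integral>\<^sup>+x. ennreal \<bar>eps 0 x\<bar> \<partial>M)"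
    by (subst nn_integral_distr) auto
  also have "\<dots> = ennreal (\<integral>x. \<bar>eps 0 x\<bar> \<partial>M)"
    by (rule nn_integral_eq_integral) (auto intro: integrable_abs eps_int)
  finally show ?thesis .
qed

lemma L1_term: "Lp_norm M 1 (\<lambda>x. P t j x * eps (t - int j) x)
   = (\<integral>\<^sup>+x. ennreal (P t j x) \<partial>M) * ennreal (\<integral>x. \<bar>eps 0 x\<bar> \<partial>M)"
proof -
  have "indep_var borel ((\<lambda>\<omega>. ennreal (\<Prod>i\<in>{1..j}. \<Prod>k<q. \<omega> (t - int i - int k))) \<circ> (\<lambda>x t. a t x))
                  borel ((\<lambda>\<omega>. ennreal \<bar>\<omega> (t - int j)\<bar>) \<circ> (\<lambda>x t. eps t x))"
    by (rule indep_var_compose[OF indep]) measurable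
  then have ind: "indep_var borel (\<lambda>x. ennreal (P t j x)) borel (\<lambda>x. ennreal \<bar>eps (t - int j) x\<bar>)"
    by (simp add: comp_def P_def Zprod_def)
  have "Lp_norm M 1 (\<lambda>x. P t j x * eps (t - int j) x)
     = (\<integral>\<^sup>+x. ennreal (P t j x) * ennreal \<bar>eps (t - int j) x\<bar> \<partial>M)"
    unfolding Lp1_eq
    by (intro nn_integral_cong) (simp add: abs_mult P_nonneg ennreal_mult)
  also have "\<dots> = (\<integral>\<^sup>+x. ennreal (P t j x) \<partial>M) * (\<integral>\<^sup>+x. ennreal \<bar>eps (t - int j) x\<bar> \<partial>M)"
    by (rule indep_var_nn_integral2[OF ind])
  finally show ?thesis by (simp add: Eeps)
qed

lemma part2: "\<not> ((\<lambda>j. \<integral>\<^sup>+ x. ennreal (\<Prod>i\<in>{1..j}. Zprod a q (t - int i) x) \<partial>M) \<longlonglongrightarrow> 0)"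
proof -
  have "\<not> ((\<lambda>j. \<integral>\<^sup>+ x. ennreal (P t j x) \<partial>M) \<longlonglongrightarrow> 0)"
    by (rule not_tendsto_0[of q "\<delta> ^ (2*q)"]) (auto intro: EP_lower ennreal_pow_pos simp: \<delta>_pos)
  then show ?thesis unfolding P_def .
qed

lemma part3': "\<not> ((\<lambda>j. Lp_norm M 1 (\<lambda>x. P t j x * eps (t - int j) x)) \<longlonglongrightarrow> 0)"
proof (rule not_tendsto_0[of q "\<delta> ^ (2*q) * ennreal (\<integral>x. \<bar>eps 0 x\<bar> \<partial>M)"])
  fix j assume "q \<le> j"
  then show "\<delta> ^ (2*q) * ennreal (\<integral>x. \<bar>eps 0 x\<bar> \<partial>M) \<le> Lp_norm M 1 (\<lambda>x. P t j x * eps (t - int j) x)"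
    unfolding L1_term by (intro mult_right_mono EP_lower) auto
next
  show "0 < \<delta> ^ (2*q) * ennreal (\<integral>x. \<bar>eps 0 x\<bar> \<partial>M)"
    using ennreal_pow_pos[OF \<delta>_pos] eps_pos by (simp add: ennreal_zero_less_mult_iff)
qed

lemma part3: "\<not> ((\<lambda>j. Lp_norm M 1 (\<lambda>x. (\<Prod>i\<in>{1..j}. Zprod a q (t - int i) x) * eps (t - int j) x)) \<longlonglongrightarrow> 0)"
  using part3'[of t] unfolding P_def .

lemma part1: "Lp_norm M p (Zprod a q 0) < 1"
proof -
  define g where "g = (\<integral>\<^sup>+x. ennreal (a 0 x powr p) \<partial>M)"
  define r where "r = enn2real g"
  have ga: "(\<integral>\<^sup>+x. ennreal (\<bar>a 0 x\<bar> powr p) \<partial>M) = g"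
    unfolding g_def by (intro nn_integral_cong) (simp add: a_nonneg)
  have A: "(if g = \<infinity> then \<infinity> else ennreal (r powr (1 / p))) < 1"
    using a_p unfolding Lp_norm_def Let_def ga r_def .
  then have gfin: "g \<noteq> \<infinity>" by (auto split: if_splits)
  with A have "ennreal (r powr (1 / p)) < 1" by simp
  then have B: "r powr (1 / p) < 1" by (simp add: ennreal_less_one_iff)
  have r0: "0 \<le> r" unfolding r_def by simp
  have r1: "r < 1"
  proof (rule ccontr)
    assume "\<not> r < 1"
    then have "1 \<le> r powr (1 / p)" using p by (intro ge_one_powr_ge_zero) auto
    with B show False by simp
  qed
  have gr: "g = ennreal r" unfolding r_def using gfin by (simp add: ennreal_enn2real less_top[symmetric])
  have inj: "inj_on (\<lambda>k::nat. - int k) {..<q}" by (auto simp: inj_on_def)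
  have "(\<integral>\<^sup>+x. ennreal (\<bar>Zprod a q 0 x\<bar> powr p) \<partial>M)
      = (\<integral>\<^sup>+x. (\<Prod>k<q. ennreal (a (- int k) x powr p)) \<partial>M)"
  proof (intro nn_integral_cong)
    fix x assume x: "x \<in> space M"
    have "\<bar>Zprod a q 0 x\<bar> = (\<Prod>k<q. a (- int k) x)"
      unfolding Zprod_def using x by (simp add: a_nonneg prod_nonneg)
    then show "ennreal (\<bar>Zprod a q 0 x\<bar> powr p) = (\<Prod>k<q. ennreal (a (- int k) x powr p))"
      by (simp add: prod_powr_distrib prod_ennreal)
  qed
  also have "\<dots> = (\<integral>\<^sup>+x. (\<Prod>s\<in>(\<lambda>k::nat. - int k) ` {..<q}. ennreal (a s x powr p)) \<partial>M)"
    by (subst prod.reindex[OF inj]) simp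
  also have "\<dots> = (\<Prod>s\<in>(\<lambda>k::nat. - int k) ` {..<q}. \<integral>\<^sup>+x. ennreal (a 0 x powr p) \<partial>M)"
    by (rule indep_prod[where f="\<lambda>s y. y powr p", OF prob_space_axioms a_iid a_ident]) auto
  also have "\<dots> = g ^ q" using card_image[OF inj] by (simp add: g_def)
  also have "\<dots> = ennreal (r ^ q)" using gr r0 by (simp add: ennreal_power)
  finally have Z: "(\<integral>\<^sup>+x. ennreal (\<bar>Zprod a q 0 x\<bar> powr p) \<partial>M) = ennreal (r ^ q)" .
  have "r ^ q < 1" using r0 r1 q by (simp add: power_less_one_iff)
  then have "(r ^ q) powr (1 / p) < 1" using r0 p by (intro powr_lt1) auto
  then show ?thesis unfolding Lp_norm_def Let_def Z using r0
    by (simp add: ennreal_less_one_iff)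
qed

lemma partial_meas[measurable]: "partial_X a eps q t n \<in> borel_measurable M"
  unfolding partial_X_def Zprod_def by measurable

lemma part4: "\<not> (\<exists>Y \<in> borel_measurable M.
                       (\<lambda>n. Lp_norm M 1 (\<lambda>x. partial_X a eps q t n x - Y x)) \<longlonglongrightarrow> 0)"
proof
  assume "\<exists>Y \<in> borel_measurable M. (\<lambda>n. Lp_norm M 1 (\<lambda>x. partial_X a eps q t n x - Y x)) \<longlonglongrightarrow> 0"
  then obtain Y where Y[measurable]: "Y \<in> borel_measurable M"
    and lim: "(\<lambda>n. Lp_norm M 1 (\<lambda>x. partial_X a eps q t n x - Y x)) \<longlonglongrightarrow> 0" by blast
  let ?S = "\<lambda>n x. partial_X a eps q t n x"
  let ?T = "\<lambda>j. Lp_norm M 1 (\<lambda>x. P t j x * eps (t - int j) x)"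
  have diff: "?S (Suc n) x - ?S n x = P t (Suc n) x * eps (t - int (Suc n)) x" for n x
    unfolding partial_X_def P_def by simp
  have le: "?T (Suc n) \<le> Lp_norm M 1 (\<lambda>x. ?S (Suc n) x - Y x) + Lp_norm M 1 (\<lambda>x. ?S n x - Y x)" for n
  proof -
    have "?T (Suc n) = (\<integral>\<^sup>+x. ennreal \<bar>?S (Suc n) x - ?S n x\<bar> \<partial>M)"
      unfolding Lp1_eq diff ..
    also have "\<dots> \<le> (\<integral>\<^sup>+x. ennreal \<bar>?S (Suc n) x - Y x\<bar> + ennreal \<bar>?S n x - Y x\<bar> \<partial>M)"
      by (intro nn_integral_mono) (simp add: ennreal_plus[symmetric] del: ennreal_plus)
    also have "\<dots> = (\<integral>\<^sup>+x. ennreal \<bar>?S (Suc n) x - Y x\<bar> \<partial>M) + (\<integral>\<^sup>+x. ennreal \<bar>?S n x - Y x\<bar> \<partial>M)"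
      by (rule nn_integral_add) auto
    finally show ?thesis unfolding Lp1_eq .
  qed
  define H where "H n = Lp_norm M 1 (\<lambda>x. ?S (Suc n) x - Y x) + Lp_norm M 1 (\<lambda>x. ?S n x - Y x)" for n
  have Hlim: "H \<longlonglongrightarrow> 0 + 0"
    unfolding H_def by (intro tendsto_add LIMSEQ_Suc[OF lim] lim)
  have ev1: "eventually (\<lambda>n. 0 \<le> ?T (Suc n)) sequentially" by simp
  have ev2: "eventually (\<lambda>n. ?T (Suc n) \<le> H n) sequentially"
    by (rule always_eventually) (use le in \<open>simp add: H_def\<close>)
  have "(\<lambda>n. ?T (Suc n)) \<longlonglongrightarrow> 0"
    using tendsto_sandwich[OF ev1 ev2 tendsto_const] Hlim by simp
  then have "?T \<longlonglongrightarrow> 0" by (rule LIMSEQ_imp_Suc)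
  with part3' show False by blast
qed

end

theorem mainTheorem13:
  fixes M :: "'w measure" and a eps :: "int \<Rightarrow> 'w \<Rightarrow> real" and q :: nat and p :: real
  assumes M: "prob_space M"
    and q: "q \<ge> 2" and p: "1 \<le> p" "p < real q"
    and a_iid: "prob_space.indep_vars M (\<lambda>_. borel) a UNIV"
    and a_ident: "\<And>t. distr M borel (a t) = distr M borel (a 0)"
    and a_nonneg: "\<And>t x. x \<in> space M \<Longrightarrow> a t x \<ge> 0"
    and a_p: "Lp_norm M p (a 0) < 1"
    and a_q: "Lp_norm M (real q) (a 0) \<ge> 1"
    and eps_meas: "\<And>t. eps t \<in> borel_measurable M"
    and eps_ident: "\<And>t. distr M borel (eps t) = distr M borel (eps 0)"
    and eps_int: "integrable M (eps 0)"
    and eps_pos: "(\<integral>x. \<bar>eps 0 x\<bar> \<partial>M) > 0"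
    and indep: "prob_space.indep_var M (PiM UNIV (\<lambda>_. borel)) (\<lambda>x t. a t x)
                                        (PiM UNIV (\<lambda>_. borel)) (\<lambda>x t. eps t x)"
  shows "Lp_norm M p (Zprod a q 0) < 1
         \<and> (\<forall>t. \<not> ((\<lambda>j. \<integral>\<^sup>+ x. ennreal (\<Prod>i\<in>{1..j}. Zprod a q (t - int i) x) \<partial>M)
                       \<longlonglongrightarrow> 0))
         \<and> (\<forall>t. \<not> ((\<lambda>j. Lp_norm M 1 (\<lambda>x. (\<Prod>i\<in>{1..j}. Zprod a q (t - int i) x) * eps (t - int j) x))
                       \<longlonglongrightarrow> 0))
         \<and> (\<forall>t. \<not> (\<exists>Y \<in> borel_measurable M.
                       (\<lambda>n. Lp_norm M 1 (\<lambda>x. partial_X a eps q t n x - Y x)) \<longlonglongrightarrow> 0))"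
  proof -
  interpret setting M a eps q p
    by (intro setting.intro setting_axioms.intro; rule assms)
  show ?thesis using part1 part2 part3 part4 by blast
qed

end
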